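(* Let $\mathcal{X}\subseteq\mathbb{R}^d$, let $k$ be a positive definite kernel on $\mathcal{X}$ with RKHS $H_k$, and let $f\in H_k$ with $\|f\|_{H_k}\le B$ for some $B>0$. Let $\lambda>0$, $n\ge1$, let $x_1,\dots,x_n\in\mathcal{X}$ and observations $y_i=f(x_i)+\epsilon_i$, $i=1,\dots,n$, where $\epsilon_1,\dots,\epsilon_n$ are i.i.d. real random variables satisfying $\mathbb{E}[e^{h\epsilon_i}]\le \exp(h^2R^2/2)$ for all $h\in\mathbb{R}$, for some $R>0$, and where $X_n=[x_1,\dots,x_n]^\top$ is independent of $E_n=[\epsilon_1,\dots,\epsilon_n]^\top$ (e.g. deterministic). Let $\mu_n(x)=k(x,X_n)^\top(k(X_n,X_n)+\lambda^2I_n)^{-1}Y_n$ with $Y_n=[y_1,\dots,y_n]^\top$, and $\sigma_n^2(x)=k(x,x)-k(x,X_n)^\top(k(X_n,X_n)+\lambda^2I_n)^{-1}k(x,X_n)$. For $\delta\in(0,1)$ set $\beta(\delta)=\frac{R}{\lambda}\sqrt{2\log(1/\delta)}$. Then for every fixed $x\in\mathcal{X}$, $$\Pr\big[f(x)\le \mu_n(x)+(B+\beta(\delta))\sigma_n(x)\big]\ge 1-\delta\quad\text{and}\quad \Pr\big[f(x)\ge \mu_n(x)-(B+\beta(\delta))\sigma_n(x)\big]\ge 1-\delta.$$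
   Context: $k(x,X_n)=[k(x,x_1),\dots,k(x,x_n)]^\top$, $k(X_n,X_n)=[k(x_i,x_j)]_{i,j=1}^n$, $I_n$ the $n\times n$ identity; $\sigma_n=\sqrt{\sigma_n^2}$. *)

theory Defs
  imports "HOL-Probability.Probability"
begin

text \<open>A finite linear combination  sum_i a_i k(., z_i)  is represented by the list of
  pairs (a_i, z_i).\<close>

definition kcomb :: "('a \<Rightarrow> 'a \<Rightarrow> real) \<Rightarrow> (real \<times> 'a) list \<Rightarrow> 'a \<Rightarrow> real" where
  "kcomb k c = (\<lambda>x. \<Sum>(a, z)\<leftarrow>c. a * k x z)"

definition kip :: "('a \<Rightarrow> 'a \<Rightarrow> real) \<Rightarrow> (real \<times> 'a) list \<Rightarrow> (real \<times> 'a) list \<Rightarrow> real" where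
  "kip k c d = (\<Sum>(a, z)\<leftarrow>c. \<Sum>(b, w)\<leftarrow>d. a * b * k z w)"

definition knorm :: "('a \<Rightarrow> 'a \<Rightarrow> real) \<Rightarrow> (real \<times> 'a) list \<Rightarrow> real" where
  "knorm k c = sqrt (kip k c c)"

definition kdiff :: "(real \<times> 'a) list \<Rightarrow> (real \<times> 'a) list \<Rightarrow> (real \<times> 'a) list" where
  "kdiff c d = c @ map (\<lambda>(b, w). (- b, w)) d"

definition pd_kernel :: "'a set \<Rightarrow> ('a \<Rightarrow> 'a \<Rightarrow> real) \<Rightarrow> bool" where
  "pd_kernel X k \<longleftrightarrow> (\<forall>x\<in>X. \<forall>y\<in>X. k x y = k y x) \<and>
     (\<forall>c. set (map snd c) \<subseteq> X \<longrightarrow> 0 \<le> kip k c c)"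

text \<open>H_k is the completion of the pre-Hilbert space span{k(.,z) | z in X}: its elements are
  the pointwise (on X) limits of Cauchy sequences of finite combinations, and the norm of
  such a limit is the limit of the norms.\<close>
definition in_rkhs_norm_le :: "'a set \<Rightarrow> ('a \<Rightarrow> 'a \<Rightarrow> real) \<Rightarrow> ('a \<Rightarrow> real) \<Rightarrow> real \<Rightarrow> bool" where
  "in_rkhs_norm_le X k f B \<longleftrightarrow>
     (\<exists>cs :: nat \<Rightarrow> (real \<times> 'a) list.
        (\<forall>m. set (map snd (cs m)) \<subseteq> X) \<and>
        (\<forall>e>0. \<exists>N. \<forall>m\<ge>N. \<forall>m'\<ge>N. knorm k (kdiff (cs m) (cs m')) < e) \<and>
        (\<forall>x\<in>X. (\<lambda>m. kcomb k (cs m) x) \<longlonglongrightarrow> f x) \<and>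
        (\<exists>L. (\<lambda>m. knorm k (cs m)) \<longlonglongrightarrow> L \<and> L \<le> B))"

definition (in prob_space) indep_rvs ::
  "'b measure \<Rightarrow> ('a \<Rightarrow> 'b) \<Rightarrow> 'c measure \<Rightarrow> ('a \<Rightarrow> 'c) \<Rightarrow> bool" where
  "indep_rvs Ma A Mb B \<longleftrightarrow> random_variable Ma A \<and> random_variable Mb B \<and>
     indep_set {A -` S \<inter> space M | S. S \<in> sets Ma} {B -` S \<inter> space M | S. S \<in> sets Mb}"

definition gram :: "('a \<Rightarrow> 'a \<Rightarrow> real) \<Rightarrow> ('n::finite \<Rightarrow> 'a) \<Rightarrow> real^'n^'n" where
  "gram k xs = (\<chi> i j. k (xs i) (xs j))"

definition kvec :: "('a \<Rightarrow> 'a \<Rightarrow> real) \<Rightarrow> 'a \<Rightarrow> ('n::finite \<Rightarrow> 'a) \<Rightarrow> real^'n" where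
  "kvec k x xs = (\<chi> i. k x (xs i))"

definition post_mean :: "('a \<Rightarrow> 'a \<Rightarrow> real) \<Rightarrow> real \<Rightarrow> ('n::finite \<Rightarrow> 'a) \<Rightarrow> real^'n \<Rightarrow> 'a \<Rightarrow> real" where
  "post_mean k lam xs Y x =
     kvec k x xs \<bullet> (matrix_inv (gram k xs + mat (lam\<^sup>2)) *v Y)"

definition post_var :: "('a \<Rightarrow> 'a \<Rightarrow> real) \<Rightarrow> real \<Rightarrow> ('n::finite \<Rightarrow> 'a) \<Rightarrow> 'a \<Rightarrow> real" where
  "post_var k lam xs x =
     k x x - kvec k x xs \<bullet> (matrix_inv (gram k xs + mat (lam\<^sup>2)) *v kvec k x xs)"

end

theory Submission imports Defs begin

lemma (in prob_space) chernoff_lin: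
  fixes eps :: "'n::finite \<Rightarrow> 'a \<Rightarrow> real" and a :: "'n \<Rightarrow> real"
  assumes indep: "indep_vars (\<lambda>_. borel) eps UNIV"
    and subg: "\<forall>i. \<forall>h::real. integrable M (\<lambda>\<omega>. exp (h * eps i \<omega>)) \<and>
                     expectation (\<lambda>\<omega>. exp (h * eps i \<omega>)) \<le> exp (h\<^sup>2 * R\<^sup>2 / 2)"
    and R: "R > 0" and d: "0 < \<delta>" "\<delta> < 1" and a: "(\<Sum>i\<in>UNIV. (a i)\<^sup>2) > 0"
  shows "prob {\<omega>\<in>space M. (\<Sum>i\<in>UNIV. a i * eps i \<omega>) > R * sqrt (\<Sum>i\<in>UNIV. (a i)\<^sup>2) * sqrt (2 * ln (1/\<delta>))} \<le> \<delta>"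
proof -
  define S2 where "S2 = (\<Sum>i\<in>UNIV. (a i)\<^sup>2)"
  define nr where "nr = sqrt S2"
  define s where "s = sqrt (2 * ln (1/\<delta>))"
  define t where "t = R * nr * s"
  define h where "h = s / (R * nr)"
  have S2: "S2 > 0" using a by (simp add: S2_def)
  have nr: "nr > 0" "nr\<^sup>2 = S2" using S2 by (auto simp: nr_def)
  have lnpos: "ln (1/\<delta>) > 0" using d by simp
  have s: "s > 0" "s\<^sup>2 = 2 * ln (1/\<delta>)" using lnpos by (auto simp: s_def)
  have h: "h > 0" using s nr R by (simp add: h_def)
  have rv: "\<And>i. random_variable borel (eps i)" using indep by (simp add: indep_vars_def)
  note rv[measurable]
  define Z where "Z \<omega> = (\<Sum>i\<in>UNIV. a i * eps i \<omega>)" for \<omega>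
  have ind2: "indep_vars (\<lambda>_. borel) (\<lambda>i \<omega>. exp (h * a i * eps i \<omega>)) UNIV"
    by (rule indep_vars_compose2[OF indep]) auto
  have int: "\<And>i. integrable M (\<lambda>\<omega>. exp (h * a i * eps i \<omega>))"
    using subg by auto
  have eq: "\<And>\<omega>. exp (h * Z \<omega>) = (\<Prod>i\<in>UNIV. exp (h * a i * eps i \<omega>))"
    by (simp add: Z_def exp_sum[symmetric] sum_distrib_left mult.assoc)
  have intZ: "integrable M (\<lambda>\<omega>. exp (h * Z \<omega>))"
    unfolding eq by (rule indep_vars_integrable[OF _ ind2]) (auto intro: int)
  have "expectation (\<lambda>\<omega>. exp (h * Z \<omega>)) = (\<Prod>i\<in>UNIV. expectation (\<lambda>\<omega>. exp (h * a i * eps i \<omega>)))"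
    unfolding eq by (rule indep_vars_lebesgue_integral[OF _ ind2]) (auto intro: int)
  also have "\<dots> \<le> (\<Prod>i\<in>UNIV. exp ((h * a i)\<^sup>2 * R\<^sup>2 / 2))"
    apply (rule prod_mono) using subg by (auto intro!: integral_nonneg_AE)
  also have "\<dots> = exp (h\<^sup>2 * R\<^sup>2 * S2 / 2)"
    by (simp add: exp_sum[symmetric] S2_def sum_divide_distrib[symmetric] sum_distrib_left power_mult_distrib algebra_simps)
  finally have E: "expectation (\<lambda>\<omega>. exp (h * Z \<omega>)) \<le> exp (h\<^sup>2 * R\<^sup>2 * S2 / 2)" .
  have "prob {\<omega>\<in>space M. Z \<omega> > t} \<le> prob {\<omega>\<in>space M. exp (h * Z \<omega>) \<ge> exp (h * t)}"
    apply (rule finite_measure_mono)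
    using h by (auto simp: Z_def)
  also have "\<dots> \<le> expectation (\<lambda>\<omega>. exp (h * Z \<omega>)) / exp (h * t)"
    by (rule integral_Markov_inequality_measure[OF intZ]) auto
  also have "\<dots> \<le> exp (h\<^sup>2 * R\<^sup>2 * S2 / 2) / exp (h * t)"
    using E by (simp add: divide_right_mono)
  also have "\<dots> = exp (h\<^sup>2 * R\<^sup>2 * S2 / 2 - h * t)" by (simp add: exp_diff)
  also have "h\<^sup>2 * R\<^sup>2 * S2 / 2 - h * t = - ln (1/\<delta>)"
  proof -
    have "h\<^sup>2 * R\<^sup>2 * S2 = s\<^sup>2" using nr R S2 unfolding h_def
      by (simp add: power_divide power_mult_distrib)
    moreover have "h * t = s\<^sup>2" using nr R unfolding h_def t_def by (simp add: power2_eq_square)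
    ultimately show ?thesis using s by simp
  qed
  also have "exp (- ln (1/\<delta>)) = \<delta>" using d by (simp add: ln_div)
  finally show ?thesis by (simp add: Z_def t_def nr_def S2_def s_def)
qed


lemma sum_list_swap2:
  "(\<Sum>p\<leftarrow>c. \<Sum>q\<leftarrow>d. F p q) = (\<Sum>q\<leftarrow>d. \<Sum>p\<leftarrow>c. (F p q :: real))"
  by (induction c) (simp_all add: sum_list_addf)

lemma kip_swap: "kip k c d = (\<Sum>(b, w)\<leftarrow>d. \<Sum>(a, z)\<leftarrow>c. a * b * k z w)"
  unfolding kip_def case_prod_unfold
  using sum_list_swap2[of "\<lambda>q p. fst p * fst q * k (snd p) (snd q)" c d]
  by simp

lemma kip_sym:
  assumes sym: "\<forall>x\<in>X. \<forall>y\<in>X. k x y = k y x"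
    and c: "set (map snd c) \<subseteq> X" and d: "set (map snd d) \<subseteq> X"
  shows "kip k c d = kip k d c"
proof -
  have "kip k c d = (\<Sum>(b, w)\<leftarrow>d. \<Sum>(a, z)\<leftarrow>c. a * b * k z w)" by (rule kip_swap)
  also have "\<dots> = (\<Sum>(b, w)\<leftarrow>d. \<Sum>(a, z)\<leftarrow>c. b * a * k w z)"
    apply (rule arg_cong[where f=sum_list], rule map_cong[OF refl])
    apply (clarsimp, rule arg_cong[where f=sum_list], rule map_cong[OF refl])
    using sym c d by (force simp: mult.commute)
  finally show ?thesis by (simp add: kip_def)
qed

lemma kip_append_left: "kip k (c1 @ c2) d = kip k c1 d + kip k c2 d"
  by (simp add: kip_def)
lemma kip_append_right: "kip k c (d1 @ d2) = kip k c d1 + kip k c d2"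
  unfolding kip_def case_prod_unfold by (simp add: sum_list_addf)

definition kscale :: "real \<Rightarrow> (real \<times> 'a) list \<Rightarrow> (real \<times> 'a) list" where
  "kscale t d = map (\<lambda>(b, w). (t * b, w)) d"

lemma kip_scale_left: "kip k (kscale t c) d = t * kip k c d"
  unfolding kip_def kscale_def case_prod_unfold
  by (induction c) (auto simp: sum_list_const_mult[symmetric] algebra_simps distrib_left o_def)

lemma kip_scale_right: "kip k c (kscale t d) = t * kip k c d"
  unfolding kip_def kscale_def case_prod_unfold
  by (induction c) (auto simp: sum_list_const_mult[symmetric] algebra_simps distrib_left o_def)

lemma quad_disc:
  fixes A B C :: real
  assumes all: "\<forall>t. 0 \<le> A + 2 * t * B + t\<^sup>2 * C" and C: "C \<ge> 0"
  shows "B\<^sup>2 \<le> A * C"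
proof (cases "C = 0")
  case True
  have "B = 0"
  proof (rule ccontr)
    assume "B \<noteq> 0"
    have "0 \<le> A + 2 * (-(A+1)/(2*B)) * B" using all[rule_format, of "-(A+1)/(2*B)"] True by simp
    also have "\<dots> = -1" using \<open>B \<noteq> 0\<close> by (simp add: field_simps)
    finally show False by simp
  qed
  then show ?thesis using True by simp
next
  case False
  with C have Cp: "C > 0" by simp
  have "0 \<le> A + 2 * (-B/C) * B + (-B/C)\<^sup>2 * C" using all by blast
  also have "\<dots> = A - B\<^sup>2 / C" using Cp by (simp add: field_simps power2_eq_square)
  finally show ?thesis using Cp by (simp add: field_simps)
qed

lemma kip_cs:
  assumes pd: "pd_kernel X k"
    and c: "set (map snd c) \<subseteq> X" and d: "set (map snd d) \<subseteq> X"
  shows "\<bar>kip k d c\<bar> \<le> knorm k c * knorm k d"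
proof -
  have sym: "\<forall>x\<in>X. \<forall>y\<in>X. k x y = k y x" and psd: "\<forall>c. set (map snd c) \<subseteq> X \<longrightarrow> 0 \<le> kip k c c"
    using pd by (auto simp: pd_kernel_def)
  have cd: "kip k c d = kip k d c" by (rule kip_sym[OF sym c d])
  have "\<forall>t. 0 \<le> kip k c c + 2 * t * kip k d c + t\<^sup>2 * kip k d d"
  proof
    fix t
    have s: "set (map snd (c @ kscale t d)) \<subseteq> X" using c d by (auto simp: kscale_def)
    have "kip k (c @ kscale t d) (c @ kscale t d) = kip k c c + 2 * t * kip k d c + t\<^sup>2 * kip k d d"
      by (simp add: kip_append_left kip_append_right kip_scale_left kip_scale_right cd power2_eq_square algebra_simps)
    then show "0 \<le> kip k c c + 2 * t * kip k d c + t\<^sup>2 * kip k d d" using psd s by metis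
  qed
  moreover have "kip k d d \<ge> 0" "kip k c c \<ge> 0" using psd c d by auto
  ultimately have "(kip k d c)\<^sup>2 \<le> kip k c c * kip k d d" using quad_disc by blast
  then have "sqrt ((kip k d c)\<^sup>2) \<le> sqrt (kip k c c * kip k d d)" by (rule real_sqrt_le_mono)
  then show ?thesis by (simp add: knorm_def real_sqrt_mult)
qed


definition ulist :: "'n::finite list" where
  "ulist = (SOME l. set l = UNIV \<and> distinct l)"

lemma ulist: "set (ulist :: 'n::finite list) = UNIV" "distinct (ulist :: 'n::finite list)"
proof -
  have "\<exists>l. set l = (UNIV :: 'n set) \<and> distinct l" using finite_distinct_list[of "UNIV :: 'n set"] by auto
  then show "set (ulist :: 'n::finite list) = UNIV" "distinct (ulist :: 'n::finite list)"
    unfolding ulist_def by (metis (mono_tags, lifting) someI_ex)+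
qed

lemma sum_ulist: "(\<Sum>i\<leftarrow>(ulist :: 'n::finite list). g i) = (\<Sum>i\<in>UNIV. (g i :: real))"
  using sum_list_distinct_conv_sum_set[OF ulist(2), of g] ulist(1) by metis

definition cvec :: "('n::finite \<Rightarrow> real) \<Rightarrow> ('n \<Rightarrow> 'a) \<Rightarrow> (real \<times> 'a) list" where
  "cvec v xi = map (\<lambda>i. (v i, xi i)) ulist"

lemma kip_cvec: "kip k (cvec v xi) (cvec w xi) = (\<Sum>i\<in>UNIV. \<Sum>j\<in>UNIV. v i * w j * k (xi i) (xi j))"
  unfolding kip_def cvec_def by (simp add: o_def sum_ulist)

lemma kip_single_cvec: "kip k [(1, x)] (cvec w xi) = (\<Sum>j\<in>UNIV. w j * k x (xi j))"
  unfolding kip_def cvec_def by (simp add: o_def sum_ulist)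

lemma kip_cvec_single: "kip k (cvec w xi) [(1, x)] = (\<Sum>j\<in>UNIV. w j * k (xi j) x)"
  unfolding kip_def cvec_def by (simp add: o_def sum_ulist)

lemma kip_cvec_any: "kip k (cvec w xi) c = (\<Sum>j\<in>UNIV. w j * kcomb k c (xi j))"
  unfolding kip_def cvec_def kcomb_def case_prod_unfold
  by (simp add: o_def sum_ulist sum_list_const_mult[symmetric] mult.assoc)

lemma kip_single_any: "kip k [(1, x)] c = kcomb k c x"
  unfolding kip_def kcomb_def case_prod_unfold by simp

lemma kip_Cons_left: "kip k (p # c) d = kip k [p] d + kip k c d"
  using kip_append_left[of k "[p]" c d] by simp
lemma kip_Cons_right: "kip k c (p # d) = kip k c [p] + kip k c d"
  using kip_append_right[of k c "[p]" d] by simp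

lemma det_part:
  fixes xi :: "'n::finite \<Rightarrow> 'a" and F E :: "real^'n"
  assumes pd: "pd_kernel X k" and xiX: "\<And>i. xi i \<in> X" and x: "x \<in> X" and lam: "lam > 0"
  defines "A \<equiv> gram k xi + mat (lam\<^sup>2)"
  defines "a \<equiv> matrix_inv A *v kvec k x xi"
  defines "d \<equiv> (1, x) # cvec (\<lambda>i. - (a $ i)) xi"
  shows "det A \<noteq> 0"
    and "post_mean k lam xi (F + E) x = a \<bullet> F + a \<bullet> E"
    and "post_var k lam xi x = kip k d d + lam\<^sup>2 * (a \<bullet> a)"
    and "set (map snd d) \<subseteq> X"
    and "\<And>c. kip k d c = kcomb k c x - (\<Sum>i\<in>UNIV. a $ i * kcomb k c (xi i))"
proof -
  have sym: "\<forall>x\<in>X. \<forall>y\<in>X. k x y = k y x" and psd: "\<forall>c. set (map snd c) \<subseteq> X \<longrightarrow> 0 \<le> kip k c c"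
    using pd by (auto simp: pd_kernel_def)
  define K where "K = gram k xi"
  have quad: "v \<bullet> (K *v v) = kip k (cvec (\<lambda>i. v$i) xi) (cvec (\<lambda>i. v$i) xi)" for v
    unfolding kip_cvec K_def gram_def inner_vec_def matrix_vector_mult_def
    by (simp add: sum_distrib_left algebra_simps)
  have Kpsd: "v \<bullet> (K *v v) \<ge> 0" for v
  proof -
    have "set (map snd (cvec (\<lambda>i. v$i) xi)) \<subseteq> X" using xiX by (auto simp: cvec_def)
    then show ?thesis unfolding quad using psd by blast
  qed
  have Av: "A *v v = K *v v + lam\<^sup>2 *s v" for v
  proof -
    have "mat (lam\<^sup>2) *v v = lam\<^sup>2 *s v"
      by (simp add: vec_eq_iff matrix_vector_mult_def mat_def if_distrib if_distribR cong: if_cong)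
    then show ?thesis unfolding A_def K_def by (simp add: matrix_vector_mult_add_rdistrib)
  qed
  have inj: "inj ((*v) A)"
  proof (rule injI)
    fix u w assume "A *v u = A *v w"
    then have "A *v (u - w) = 0" by (simp add: matrix_vector_mult_diff_distrib)
    then have "K *v (u - w) + lam\<^sup>2 *s (u - w) = 0" unfolding Av .
    then have "(u - w) \<bullet> (K *v (u - w) + lam\<^sup>2 *s (u - w)) = 0" by simp
    then have "(u - w) \<bullet> (K *v (u - w)) + lam\<^sup>2 * ((u - w) \<bullet> (u - w)) = 0"
      by (simp only: inner_add_right scalar_mult_eq_scaleR inner_scaleR_right)
    moreover have "(u - w) \<bullet> (K *v (u - w)) \<ge> 0" by (rule Kpsd)
    moreover have "(u - w) \<bullet> (u - w) \<ge> 0" by simp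
    ultimately have "(u - w) \<bullet> (u - w) = 0" using lam
      by (smt (verit) mult_pos_pos zero_less_power)
    then show "u = w" by simp
  qed
  show detA: "det A \<noteq> 0"
    using det_nz_iff_inj[of "(*v) A"] inj by (simp add: matrix_of_matrix_vector_mul)
  then have "invertible A" by (simp add: invertible_det_nz)
  then have "\<exists>A'. A ** A' = mat 1 \<and> A' ** A = mat 1" by (simp add: invertible_def)
  then have inv: "A ** matrix_inv A = mat 1" "matrix_inv A ** A = mat 1"
    unfolding matrix_inv_def by (metis (mono_tags, lifting) someI_ex)+
  have Asym: "transpose A = A"
    unfolding A_def gram_def transpose_def using sym xiX by (auto simp: vec_eq_iff mat_def)
  have Aa: "A *v a = kvec k x xi"
    unfolding a_def by (simp add: matrix_vector_mul_assoc inv)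
  have key: "kvec k x xi \<bullet> (matrix_inv A *v v) = a \<bullet> v" for v
  proof -
    have "kvec k x xi \<bullet> (matrix_inv A *v v) = (a v* transpose A) \<bullet> (matrix_inv A *v v)"
      by (simp add: Aa[symmetric])
    also have "\<dots> = a \<bullet> (transpose A *v (matrix_inv A *v v))" by (rule dot_lmul_matrix)
    also have "\<dots> = a \<bullet> v" by (simp add: Asym matrix_vector_mul_assoc inv)
    finally show ?thesis .
  qed
  show "post_mean k lam xi (F + E) x = a \<bullet> F + a \<bullet> E"
    unfolding post_mean_def A_def[symmetric] key by (simp add: inner_add_right)
  have pv: "post_var k lam xi x = k x x - a \<bullet> kvec k x xi"
    unfolding post_var_def A_def[symmetric] key ..
  have akv: "a \<bullet> kvec k x xi = a \<bullet> (K *v a) + lam\<^sup>2 * (a \<bullet> a)"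
    unfolding Aa[symmetric] Av by (simp add: inner_add_right scalar_mult_eq_scaleR)
  have c1: "kip k [(1,x)] (cvec (\<lambda>i. - (a $ i)) xi) = - (a \<bullet> kvec k x xi)"
    unfolding kip_single_cvec inner_vec_def kvec_def by (simp add: sum_negf mult.commute)
  have c2: "kip k (cvec (\<lambda>i. - (a $ i)) xi) [(1,x)] = - (a \<bullet> kvec k x xi)"
    unfolding kip_cvec_single inner_vec_def kvec_def using sym xiX x
    by (auto simp: sum_negf mult.commute intro!: sum.cong)
  have c3: "kip k (cvec (\<lambda>i. - (a $ i)) xi) (cvec (\<lambda>i. - (a $ i)) xi) = a \<bullet> (K *v a)"
    unfolding kip_cvec K_def gram_def inner_vec_def matrix_vector_mult_def
    by (simp add: sum_distrib_left algebra_simps)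
  have "kip k d d = k x x - 2 * (a \<bullet> kvec k x xi) + a \<bullet> (K *v a)"
    unfolding d_def
    apply (subst kip_Cons_left)
    apply (subst kip_Cons_right[of k "[(1,x)]"])
    apply (subst kip_Cons_right[of k "cvec (\<lambda>i. - (a $ i)) xi"])
    apply (simp only: c1 c2 c3)
    by (simp add: kip_def)
  then show "post_var k lam xi x = kip k d d + lam\<^sup>2 * (a \<bullet> a)"
    unfolding pv using akv by simp
  show "set (map snd d) \<subseteq> X" using x xiX by (auto simp: d_def cvec_def)
  show "kip k d c = kcomb k c x - (\<Sum>i\<in>UNIV. a $ i * kcomb k c (xi i))" for c
    unfolding d_def
    apply (subst kip_Cons_left)
    by (simp add: kip_single_any kip_cvec_any sum_negf)
qed


lemma rkhs_part:
  fixes xi :: "'n::finite \<Rightarrow> 'a"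
  assumes pd: "pd_kernel X k" and f: "in_rkhs_norm_le X k f B"
    and xiX: "\<And>i. xi i \<in> X" and x: "x \<in> X" and lam: "lam > 0"
  defines "A \<equiv> gram k xi + mat (lam\<^sup>2)"
  defines "a \<equiv> matrix_inv A *v kvec k x xi"
  defines "d \<equiv> (1, x) # cvec (\<lambda>i. - (a $ i)) xi"
  shows "\<bar>f x - a \<bullet> (\<chi> i. f (xi i))\<bar> \<le> B * knorm k d"
proof -
  obtain cs :: "nat \<Rightarrow> (real \<times> 'a) list" and L where
    csX: "\<forall>m. set (map snd (cs m)) \<subseteq> X" and
    lim: "\<forall>x\<in>X. (\<lambda>m. kcomb k (cs m) x) \<longlonglongrightarrow> f x" and
    L: "(\<lambda>m. knorm k (cs m)) \<longlonglongrightarrow> L" "L \<le> B"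
    using f unfolding in_rkhs_norm_le_def by blast
  note dp = det_part[where xi=xi and X=X and k=k and x=x and lam=lam, OF pd xiX x lam, folded A_def, folded a_def, folded d_def]
  have psd: "\<forall>c. set (map snd c) \<subseteq> X \<longrightarrow> 0 \<le> kip k c c" using pd by (auto simp: pd_kernel_def)
  have kd: "knorm k d \<ge> 0" using psd dp(4) by (simp add: knorm_def)
  have g: "(\<lambda>m. kip k d (cs m)) \<longlonglongrightarrow> f x - a \<bullet> (\<chi> i. f (xi i))"
    unfolding dp(5) inner_vec_def
    by (auto intro!: tendsto_intros lim[rule_format] x xiX)
  have "\<bar>f x - a \<bullet> (\<chi> i. f (xi i))\<bar> \<le> L * knorm k d"
  proof (rule tendsto_le[OF _ _ tendsto_rabs[OF g]])
    show "(\<lambda>m. knorm k (cs m) * knorm k d) \<longlonglongrightarrow> L * knorm k d"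
      by (intro tendsto_intros L)
    show "\<forall>\<^sub>F m in sequentially. \<bar>kip k d (cs m)\<bar> \<le> knorm k (cs m) * knorm k d"
      using kip_cs[OF pd _ dp(4)] csX by auto
  qed simp
  also have "\<dots> \<le> B * knorm k d" using L(2) kd by (rule mult_right_mono)
  finally show ?thesis .
qed


lemma (in prob_space) indep_rvs_distr:
  assumes "indep_rvs S X T Y"
  shows "random_variable S X" "random_variable T Y"
    "distr M (S \<Otimes>\<^sub>M T) (\<lambda>x. (X x, Y x)) = distr M S X \<Otimes>\<^sub>M distr M T Y"
proof -
  show rvs: "random_variable S X" "random_variable T Y" using assms by (auto simp: indep_rvs_def)
  have ind: "indep_set {X -` A \<inter> space M | A. A \<in> sets S} {Y -` A \<inter> space M | A. A \<in> sets T}"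
    using assms by (auto simp: indep_rvs_def)
  then have XY: "random_variable (S \<Otimes>\<^sub>M T) (\<lambda>x. (X x, Y x))"
    using rvs by (intro measurable_Pair)
  let ?S = "distr M S X" and ?T = "distr M T Y" and ?J = "distr M (S \<Otimes>\<^sub>M T) (\<lambda>x. (X x, Y x))"
  interpret X: prob_space ?S by (rule prob_space_distr) fact
  interpret Y: prob_space ?T by (rule prob_space_distr) fact
  interpret XY: pair_prob_space ?S ?T ..
  show "?J = ?S \<Otimes>\<^sub>M ?T"
  proof (rule pair_measure_eqI[symmetric])
    show "sigma_finite_measure ?S" ..
    show "sigma_finite_measure ?T" ..
    fix A B assume A: "A \<in> sets ?S" and B: "B \<in> sets ?T"
    have "emeasure ?J (A \<times> B) = emeasure M ((\<lambda>x. (X x, Y x)) -` (A \<times> B) \<inter> space M)"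
      using A B by (intro emeasure_distr[OF XY]) auto
    also have "(\<lambda>x. (X x, Y x)) -` (A \<times> B) \<inter> space M = (X -` A \<inter> space M) \<inter> (Y -` B \<inter> space M)"
      by auto
    also have "emeasure M \<dots> = emeasure M (X -` A \<inter> space M) * emeasure M (Y -` B \<inter> space M)"
    proof -
      have "prob ((X -` A \<inter> space M) \<inter> (Y -` B \<inter> space M)) = prob (X -` A \<inter> space M) * prob (Y -` B \<inter> space M)"
        using indep_setD[OF ind, of "X -` A \<inter> space M" "Y -` B \<inter> space M"] A B by auto
      then show ?thesis by (simp add: emeasure_eq_measure measure_nonneg ennreal_mult)
    qed
    also have "\<dots> = emeasure ?S A * emeasure ?T B"
      using rvs A B by (simp add: emeasure_distr)
    finally show "emeasure ?S A * emeasure ?T B = emeasure ?J (A \<times> B)" by simp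
  qed simp
qed

lemma (in prob_space) indep_chernoff:
  fixes xs :: "'n::finite \<Rightarrow> 'a \<Rightarrow> 'b::topological_space"
    and eps :: "'n \<Rightarrow> 'a \<Rightarrow> real"
    and g :: "('n \<Rightarrow> 'b) \<Rightarrow> 'n \<Rightarrow> real"
  assumes XE: "indep_rvs (Pi\<^sub>M UNIV (\<lambda>_. borel)) (\<lambda>\<omega>. \<lambda>i. xs i \<omega>)
                      (Pi\<^sub>M UNIV (\<lambda>_. borel)) (\<lambda>\<omega>. \<lambda>i. eps i \<omega>)"
    and indep: "indep_vars (\<lambda>_. borel) eps UNIV"
    and subg: "\<forall>i. \<forall>h::real. integrable M (\<lambda>\<omega>. exp (h * eps i \<omega>)) \<and>
                     expectation (\<lambda>\<omega>. exp (h * eps i \<omega>)) \<le> exp (h\<^sup>2 * R\<^sup>2 / 2)"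
    and R: "R > 0" and d: "0 < \<delta>" "\<delta> < 1"
    and gm: "\<And>i. (\<lambda>\<xi>. g \<xi> i) \<in> borel_measurable (Pi\<^sub>M UNIV (\<lambda>_. borel))"
  shows "prob {\<omega>\<in>space M. (\<Sum>i\<in>UNIV. g (\<lambda>i. xs i \<omega>) i * eps i \<omega>) >
            R * sqrt (\<Sum>i\<in>UNIV. (g (\<lambda>i. xs i \<omega>) i)\<^sup>2) * sqrt (2 * ln (1/\<delta>))} \<le> \<delta>"
proof -
  let ?PB = "Pi\<^sub>M UNIV (\<lambda>_. borel) :: ('n \<Rightarrow> 'b) measure"
  let ?PR = "Pi\<^sub>M UNIV (\<lambda>_. borel) :: ('n \<Rightarrow> real) measure"
  define Xv where "Xv \<omega> = (\<lambda>i. xs i \<omega>)" for \<omega>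
  define Ev where "Ev \<omega> = (\<lambda>i. eps i \<omega>)" for \<omega>
  define s where "s = sqrt (2 * ln (1/\<delta>))"
  note ide = indep_rvs_distr[OF XE[folded Xv_def Ev_def]]
  have rvX[measurable]: "Xv \<in> measurable M ?PB" and rvE[measurable]: "Ev \<in> measurable M ?PR"
    using ide by auto
  define PX where "PX = distr M ?PB Xv"
  define PE where "PE = distr M ?PR Ev"
  interpret PX: prob_space PX unfolding PX_def by (rule prob_space_distr) simp
  interpret PE: prob_space PE unfolding PE_def by (rule prob_space_distr) simp
  have joint: "distr M (?PB \<Otimes>\<^sub>M ?PR) (\<lambda>\<omega>. (Xv \<omega>, Ev \<omega>)) = PX \<Otimes>\<^sub>M PE"
    using ide by (simp add: PX_def PE_def)
  have gm2[measurable]: "(\<lambda>p. g (fst p) i) \<in> borel_measurable (?PB \<Otimes>\<^sub>M ?PR)" for i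
    using measurable_compose[OF measurable_fst[of ?PB ?PR] gm] by simp
  have sm2[measurable]: "(\<lambda>p. snd p i) \<in> borel_measurable (?PB \<Otimes>\<^sub>M ?PR)" for i
    using measurable_compose[OF measurable_snd measurable_component_singleton[of i UNIV "\<lambda>_. borel"]]
    by simp
  define S where "S = {p \<in> space (?PB \<Otimes>\<^sub>M ?PR). (\<Sum>i\<in>UNIV. g (fst p) i * snd p i) >
            R * sqrt (\<Sum>i\<in>UNIV. (g (fst p) i)\<^sup>2) * s}"
  have S: "S \<in> sets (?PB \<Otimes>\<^sub>M ?PR)" unfolding S_def by measurable
  have "emeasure M {\<omega>\<in>space M. (\<Sum>i\<in>UNIV. g (Xv \<omega>) i * eps i \<omega>) >
            R * sqrt (\<Sum>i\<in>UNIV. (g (Xv \<omega>) i)\<^sup>2) * s}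
        = emeasure M ((\<lambda>\<omega>. (Xv \<omega>, Ev \<omega>)) -` S \<inter> space M)"
    apply (rule arg_cong[where f="emeasure M"])
    using measurable_space[OF rvX] measurable_space[OF rvE]
    by (auto simp: S_def Ev_def space_pair_measure)
  also have "\<dots> = emeasure (PX \<Otimes>\<^sub>M PE) S"
    using S by (simp add: joint[symmetric] emeasure_distr)
  also have "\<dots> = (\<integral>\<^sup>+\<xi>. emeasure PE (Pair \<xi> -` S) \<partial>PX)"
    using S PE.emeasure_pair_measure_alt[of S PX] by (simp add: PX_def PE_def)
  also have "\<dots> \<le> (\<integral>\<^sup>+\<xi>. ennreal \<delta> \<partial>PX)"
  proof (rule nn_integral_mono)
    fix \<xi> assume \<xi>: "\<xi> \<in> space PX"
    have eq: "Pair \<xi> -` S = {e \<in> space ?PR. (\<Sum>i\<in>UNIV. g \<xi> i * e i) > R * sqrt (\<Sum>i\<in>UNIV. (g \<xi> i)\<^sup>2) * s}"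
      using \<xi> by (auto simp: S_def space_pair_measure PX_def)
    have "emeasure PE (Pair \<xi> -` S) = emeasure M {\<omega>\<in>space M. (\<Sum>i\<in>UNIV. g \<xi> i * eps i \<omega>) > R * sqrt (\<Sum>i\<in>UNIV. (g \<xi> i)\<^sup>2) * s}"
      unfolding eq PE_def
      apply (subst emeasure_distr)
        apply simp
       apply measurable
      apply (rule arg_cong[where f="emeasure M"])
      using measurable_space[OF rvE] by (auto simp: Ev_def)
    also have "\<dots> \<le> ennreal \<delta>"
    proof (cases "(\<Sum>i\<in>UNIV. (g \<xi> i)\<^sup>2) > 0")
      case True
      show ?thesis
        using chernoff_lin[OF indep subg R d True] unfolding s_def
        by (simp add: emeasure_eq_measure ennreal_leI)
    next
      case False
      then have "\<forall>i\<in>UNIV. (g \<xi> i)\<^sup>2 = 0"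
        using sum_nonneg_eq_0_iff[of UNIV "\<lambda>i. (g \<xi> i)\<^sup>2"]
          sum_nonneg[of UNIV "\<lambda>i. (g \<xi> i)\<^sup>2"] by (simp add: not_less)
      then show ?thesis by simp
    qed
    finally show "emeasure PE (Pair \<xi> -` S) \<le> ennreal \<delta>" .
  qed
  also have "\<dots> = ennreal \<delta>" using PX.emeasure_space_1 by simp
  finally show ?thesis
    unfolding Xv_def s_def using d by (simp add: emeasure_eq_measure)
qed


definition cram :: "real^'n^'n \<Rightarrow> real^'n \<Rightarrow> real^'n" where
  "cram A b = (\<chi> j. det (\<chi> i j'. if j' = j then b $ i else A $ i $ j') / det A)"

lemma inv_cram:
  fixes A :: "real^'n::finite^'n"
  assumes d0: "det A \<noteq> 0"
  shows "matrix_inv A *v b = cram A b"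
proof -
  have "invertible A" using d0 by (simp add: invertible_det_nz)
  then have "\<exists>A'. A ** A' = mat 1 \<and> A' ** A = mat 1" by (simp add: invertible_def)
  then have inv: "A ** matrix_inv A = mat 1"
    unfolding matrix_inv_def by (metis (mono_tags, lifting) someI_ex)
  have "A *v (matrix_inv A *v b) = b" by (simp add: matrix_vector_mul_assoc inv)
  then show ?thesis using cramer[OF d0] unfolding cram_def by blast
qed

lemma det_meas:
  fixes F :: "'w \<Rightarrow> real^'n::finite^'n"
  assumes "\<And>i j. (\<lambda>\<omega>. F \<omega> $ i $ j) \<in> borel_measurable N"
  shows "(\<lambda>\<omega>. det (F \<omega>)) \<in> borel_measurable N"
  unfolding det_def
  by (intro borel_measurable_sum borel_measurable_times borel_measurable_prod borel_measurable_const assms)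

lemma cram_meas:
  fixes F :: "'w \<Rightarrow> real^'n::finite^'n" and b :: "'w \<Rightarrow> real^'n"
  assumes "\<And>i j. (\<lambda>\<omega>. F \<omega> $ i $ j) \<in> borel_measurable N"
    and "\<And>i. (\<lambda>\<omega>. b \<omega> $ i) \<in> borel_measurable N"
  shows "(\<lambda>\<omega>. cram (F \<omega>) (b \<omega>) $ j) \<in> borel_measurable N"
  unfolding cram_def
  apply (simp, intro borel_measurable_divide det_meas)
   apply (auto simp: assms)
  apply (case_tac "ja = j")
   apply (auto simp: assms)
  done

lemma kmeas:
  assumes k_meas: "(\<lambda>(u, v). k u v) \<in> borel_measurable (borel :: ('a::second_countable_topology \<times> 'a) measure)"
    and p: "p \<in> measurable N borel" and q: "q \<in> measurable N borel"
  shows "(\<lambda>\<omega>. k (p \<omega>) (q \<omega>) :: real) \<in> borel_measurable N"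
proof -
  have "(\<lambda>\<omega>. (p \<omega>, q \<omega>)) \<in> measurable N (borel \<Otimes>\<^sub>M borel)"
    using p q by (rule measurable_Pair)
  then have "(\<lambda>\<omega>. (p \<omega>, q \<omega>)) \<in> measurable N borel" by (simp add: borel_prod)
  from measurable_compose[OF this k_meas] show ?thesis by simp
qed

definition als :: "('a \<Rightarrow> 'a \<Rightarrow> real) \<Rightarrow> real \<Rightarrow> 'a \<Rightarrow> ('n::finite \<Rightarrow> 'a) \<Rightarrow> real^'n" where
  "als k lam x \<xi> = cram (gram k \<xi> + mat (lam\<^sup>2)) (kvec k x \<xi>)"

lemma gram_meas:
  assumes k_meas: "(\<lambda>(u, v). k u v) \<in> borel_measurable (borel :: ('a::second_countable_topology \<times> 'a) measure)"
    and z: "\<And>i. (\<lambda>\<omega>. \<zeta> \<omega> i) \<in> measurable N borel"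
  shows "(\<lambda>\<omega>. (gram k (\<zeta> \<omega>) + mat c) $ i $ j) \<in> borel_measurable N"
    and "(\<lambda>\<omega>. kvec k x (\<zeta> \<omega>) $ i) \<in> borel_measurable N"
proof -
  have "(\<lambda>\<omega>. k (\<zeta> \<omega> i) (\<zeta> \<omega> j) + (if i = j then c else 0)) \<in> borel_measurable N"
    by (intro borel_measurable_add kmeas[OF k_meas] z borel_measurable_const)
  then show "(\<lambda>\<omega>. (gram k (\<zeta> \<omega>) + mat c) $ i $ j) \<in> borel_measurable N"
    by (simp add: gram_def mat_def)
  have "(\<lambda>\<omega>. k x (\<zeta> \<omega> i)) \<in> borel_measurable N"
    by (intro kmeas[OF k_meas] z measurable_const) simp
  then show "(\<lambda>\<omega>. kvec k x (\<zeta> \<omega>) $ i) \<in> borel_measurable N"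
    by (simp add: kvec_def)
qed

lemma als_meas:
  assumes k_meas: "(\<lambda>(u, v). k u v) \<in> borel_measurable (borel :: ('a::second_countable_topology \<times> 'a) measure)"
    and z: "\<And>i. (\<lambda>\<omega>. \<zeta> \<omega> i) \<in> measurable N borel"
  shows "(\<lambda>\<omega>. als k lam x (\<zeta> \<omega>) $ j) \<in> borel_measurable N"
  unfolding als_def by (intro cram_meas gram_meas[OF k_meas z])

lemma sum_list_meas:
  assumes "\<And>p. p \<in> set c \<Longrightarrow> (\<lambda>\<omega>. h p \<omega>) \<in> borel_measurable N"
  shows "(\<lambda>\<omega>. \<Sum>p\<leftarrow>c. (h p \<omega> :: real)) \<in> borel_measurable N"
  using assms by (induction c) auto

lemma arith1:
  fixes kdd aa fx aF aE pv B R lam s :: real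
  assumes "kdd \<ge> 0" "aa \<ge> 0" "lam > 0" "R > 0" "s \<ge> 0" "B \<ge> 0"
    and fx: "fx - aF \<le> B * sqrt kdd" and pv: "pv = kdd + lam\<^sup>2 * aa"
    and n: "\<not> (fx \<le> aF + aE + (B + R / lam * s) * sqrt pv)"
  shows "- aE > R * sqrt aa * s"
proof -
  have s1: "sqrt pv \<ge> sqrt kdd" using assms by (simp add: pv)
  have "sqrt pv \<ge> sqrt (lam\<^sup>2 * aa)" using assms by (simp add: pv)
  then have s2: "sqrt pv \<ge> lam * sqrt aa" using assms by (simp add: real_sqrt_mult)
  have "B * sqrt kdd \<le> B * sqrt pv" using s1 assms by (simp add: mult_left_mono)
  moreover have "R / lam * s * (lam * sqrt aa) \<le> R / lam * s * sqrt pv"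
    using s2 assms by (intro mult_left_mono) auto
  moreover have "R / lam * s * (lam * sqrt aa) = R * sqrt aa * s" using assms by simp
  ultimately show ?thesis using fx n by (simp add: algebra_simps)
qed

lemma arith2:
  fixes kdd aa fx aF aE pv B R lam s :: real
  assumes "kdd \<ge> 0" "aa \<ge> 0" "lam > 0" "R > 0" "s \<ge> 0" "B \<ge> 0"
    and fx: "aF - fx \<le> B * sqrt kdd" and pv: "pv = kdd + lam\<^sup>2 * aa"
    and n: "\<not> (fx \<ge> aF + aE - (B + R / lam * s) * sqrt pv)"
  shows "aE > R * sqrt aa * s"
  using arith1[of kdd aa lam R s B "-fx" "-aF" pv "-aE"] assms by (simp add: algebra_simps)

theorem theorem1:
  fixes X :: "'a::euclidean_space set"
    and k :: "'a \<Rightarrow> 'a \<Rightarrow> real"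
    and f :: "'a \<Rightarrow> real"
    and M :: "'w measure"
    and xs :: "'n::finite \<Rightarrow> 'w \<Rightarrow> 'a"
    and eps :: "'n \<Rightarrow> 'w \<Rightarrow> real"
    and B lam R \<delta> :: real
    and x :: 'a
  assumes pd: "pd_kernel X k"
    and k_meas: "(\<lambda>(u, v). k u v) \<in> borel_measurable borel"
    and f_rkhs: "in_rkhs_norm_le X k f B"
    and B_pos: "B > 0"
    and lam_pos: "lam > 0"
    and R_pos: "R > 0"
    and P: "prob_space M"
    and xs_in: "\<forall>i. \<forall>\<omega>\<in>space M. xs i \<omega> \<in> X"
    and eps_indep: "prob_space.indep_vars M (\<lambda>_. borel) eps UNIV"
    and eps_ident: "\<forall>i j. distr M borel (eps i) = distr M borel (eps j)"
    and eps_subg: "\<forall>i. \<forall>h::real. integrable M (\<lambda>\<omega>. exp (h * eps i \<omega>)) \<and>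
                     prob_space.expectation M (\<lambda>\<omega>. exp (h * eps i \<omega>)) \<le> exp (h\<^sup>2 * R\<^sup>2 / 2)"
    and X_E_indep: "prob_space.indep_rvs M
                      (Pi\<^sub>M UNIV (\<lambda>_. borel)) (\<lambda>\<omega>. \<lambda>i. xs i \<omega>)
                      (Pi\<^sub>M UNIV (\<lambda>_. borel)) (\<lambda>\<omega>. \<lambda>i. eps i \<omega>)"
    and x_in: "x \<in> X"
    and delta: "0 < \<delta>" "\<delta> < 1"
  shows "prob_space.prob M {\<omega> \<in> space M.
           f x \<le> post_mean k lam (\<lambda>i. xs i \<omega>) (\<chi> i. f (xs i \<omega>) + eps i \<omega>) x
                  + (B + R / lam * sqrt (2 * ln (1 / \<delta>))) * sqrt (post_var k lam (\<lambda>i. xs i \<omega>) x)}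
           \<ge> 1 - \<delta>
       \<and> prob_space.prob M {\<omega> \<in> space M.
           f x \<ge> post_mean k lam (\<lambda>i. xs i \<omega>) (\<chi> i. f (xs i \<omega>) + eps i \<omega>) x
                  - (B + R / lam * sqrt (2 * ln (1 / \<delta>))) * sqrt (post_var k lam (\<lambda>i. xs i \<omega>) x)}
           \<ge> 1 - \<delta>"
proof -
  interpret prob_space M by (rule P)
  define s where "s = sqrt (2 * ln (1 / \<delta>))"
  have s0: "s \<ge> 0" using delta by (simp add: s_def)
  note rvs = indep_rvs_distr[OF X_E_indep]
  have xsm[measurable]: "(\<lambda>\<omega>. xs i \<omega>) \<in> measurable M borel" for i
    using measurable_compose[OF rvs(1) measurable_component_singleton[of i UNIV]] by simp
  have epsm[measurable]: "eps i \<in> borel_measurable M" for i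
    using eps_indep by (simp add: indep_vars_def)
  obtain cs :: "nat \<Rightarrow> (real \<times> 'a) list" where
    csX: "\<forall>m. set (map snd (cs m)) \<subseteq> X" and
    lim: "\<forall>x\<in>X. (\<lambda>m. kcomb k (cs m) x) \<longlonglongrightarrow> f x"
    using f_rkhs unfolding in_rkhs_norm_le_def by blast
  have fm[measurable]: "(\<lambda>\<omega>. f (xs i \<omega>)) \<in> borel_measurable M" for i
  proof (rule borel_measurable_LIMSEQ_real)
    show "(\<lambda>m. kcomb k (cs m) (xs i \<omega>)) \<longlonglongrightarrow> f (xs i \<omega>)" if "\<omega> \<in> space M" for \<omega>
      using lim xs_in that by blast
    show "(\<lambda>\<omega>. kcomb k (cs m) (xs i \<omega>)) \<in> borel_measurable M" for m
      unfolding kcomb_def case_prod_unfold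
      by (intro sum_list_meas borel_measurable_times borel_measurable_const kmeas[OF k_meas] xsm)
  qed
  have alm[measurable]: "(\<lambda>\<omega>. als k lam x (\<lambda>i. xs i \<omega>) $ j) \<in> borel_measurable M" for j
    by (rule als_meas[OF k_meas]) simp
  define A where "A \<omega> = gram k (\<lambda>i. xs i \<omega>) + mat (lam\<^sup>2)" for \<omega>
  define Y where "Y \<omega> = (\<chi> i. f (xs i \<omega>) + eps i \<omega>)" for \<omega>
  define kv where "kv \<omega> = kvec k x (\<lambda>i. xs i \<omega>)" for \<omega>
  have Am: "(\<lambda>\<omega>. A \<omega> $ i $ j) \<in> borel_measurable M" for i j
    unfolding A_def by (rule gram_meas[OF k_meas]) simp
  have kvm: "(\<lambda>\<omega>. kv \<omega> $ i) \<in> borel_measurable M" for i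
    unfolding kv_def by (rule gram_meas[OF k_meas]) simp
  have Ym: "(\<lambda>\<omega>. Y \<omega> $ i) \<in> borel_measurable M" for i
    unfolding Y_def by simp
  define pm' where "pm' \<omega> = (\<Sum>j\<in>UNIV. kv \<omega> $ j * cram (A \<omega>) (Y \<omega>) $ j)" for \<omega>
  define pv' where "pv' \<omega> = k x x - (\<Sum>j\<in>UNIV. kv \<omega> $ j * cram (A \<omega>) (kv \<omega>) $ j)" for \<omega>
  have pm'm[measurable]: "pm' \<in> borel_measurable M"
    unfolding pm'_def by (intro borel_measurable_sum borel_measurable_times kvm cram_meas Am Ym)
  have pv'm[measurable]: "pv' \<in> borel_measurable M"
    unfolding pv'_def by (intro borel_measurable_diff borel_measurable_const borel_measurable_sum borel_measurable_times kvm cram_meas Am)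
  define d where "d \<omega> = (1, x) # cvec (\<lambda>i. - (als k lam x (\<lambda>i. xs i \<omega>) $ i)) (\<lambda>i. xs i \<omega>)" for \<omega>
  have pw: "post_mean k lam (\<lambda>i. xs i \<omega>) (Y \<omega>) x = pm' \<omega>
        \<and> post_var k lam (\<lambda>i. xs i \<omega>) x = pv' \<omega>
        \<and> \<bar>f x - als k lam x (\<lambda>i. xs i \<omega>) \<bullet> (\<chi> i. f (xs i \<omega>))\<bar> \<le> B * sqrt (kip k (d \<omega>) (d \<omega>))
        \<and> post_mean k lam (\<lambda>i. xs i \<omega>) (Y \<omega>) x = als k lam x (\<lambda>i. xs i \<omega>) \<bullet> (\<chi> i. f (xs i \<omega>)) + als k lam x (\<lambda>i. xs i \<omega>) \<bullet> (\<chi> i. eps i \<omega>)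
        \<and> post_var k lam (\<lambda>i. xs i \<omega>) x = kip k (d \<omega>) (d \<omega>) + lam\<^sup>2 * (als k lam x (\<lambda>i. xs i \<omega>) \<bullet> als k lam x (\<lambda>i. xs i \<omega>))
        \<and> kip k (d \<omega>) (d \<omega>) \<ge> 0"
    if \<omega>: "\<omega> \<in> space M" for \<omega>
  proof -
    have xiX: "\<And>i. xs i \<omega> \<in> X" using xs_in \<omega> by blast
    note dp = det_part[where xi="\<lambda>i. xs i \<omega>" and X=X and k=k and x=x and lam=lam, OF pd xiX x_in lam_pos]
    have det0: "det (A \<omega>) \<noteq> 0" using dp(1) by (simp add: A_def)
    have aeq: "matrix_inv (A \<omega>) *v kv \<omega> = als k lam x (\<lambda>i. xs i \<omega>)"
      using inv_cram[OF det0] by (simp add: als_def A_def kv_def)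
    have Yeq: "Y \<omega> = (\<chi> i. f (xs i \<omega>)) + (\<chi> i. eps i \<omega>)"
      by (simp add: Y_def vec_eq_iff)
    note dp' = dp[folded A_def kv_def, unfolded aeq, folded d_def]
    have pmY: "post_mean k lam (\<lambda>i. xs i \<omega>) (Y \<omega>) x = als k lam x (\<lambda>i. xs i \<omega>) \<bullet> (\<chi> i. f (xs i \<omega>)) + als k lam x (\<lambda>i. xs i \<omega>) \<bullet> (\<chi> i. eps i \<omega>)"
      unfolding Yeq by (rule dp'(2))
    have "post_mean k lam (\<lambda>i. xs i \<omega>) (Y \<omega>) x = pm' \<omega>"
      unfolding post_mean_def pm'_def inner_vec_def
      by (simp add: A_def[symmetric] kv_def[symmetric] inv_cram[OF det0])
    moreover have "post_var k lam (\<lambda>i. xs i \<omega>) x = pv' \<omega>"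
      unfolding post_var_def pv'_def inner_vec_def
      by (simp add: A_def[symmetric] kv_def[symmetric] inv_cram[OF det0])
    moreover have "\<bar>f x - als k lam x (\<lambda>i. xs i \<omega>) \<bullet> (\<chi> i. f (xs i \<omega>))\<bar> \<le> B * sqrt (kip k (d \<omega>) (d \<omega>))"
      using rkhs_part[where xi="\<lambda>i. xs i \<omega>", OF pd f_rkhs xiX x_in lam_pos]
      unfolding knorm_def d_def using aeq by (simp add: A_def kv_def)
    moreover have "kip k (d \<omega>) (d \<omega>) \<ge> 0"
      using pd dp'(4) by (auto simp: pd_kernel_def)
    ultimately show ?thesis using pmY dp'(3) by simp
  qed
  define al where "al \<omega> = als k lam x (\<lambda>i. xs i \<omega>)" for \<omega>
  have gm: "(\<lambda>\<xi>. c * als k lam x \<xi> $ i) \<in> borel_measurable (Pi\<^sub>M UNIV (\<lambda>_. borel))" for c i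
    by (intro borel_measurable_times borel_measurable_const als_meas[OF k_meas]) simp
  define Bd where "Bd c = {\<omega>\<in>space M. (\<Sum>i\<in>UNIV. (c * al \<omega> $ i) * eps i \<omega>) >
            R * sqrt (\<Sum>i\<in>UNIV. (c * al \<omega> $ i)\<^sup>2) * s}" for c
  have pB: "prob (Bd c) \<le> \<delta>" for c
    using indep_chernoff[OF X_E_indep eps_indep eps_subg R_pos delta, where g="\<lambda>\<xi> i. c * als k lam x \<xi> $ i", OF gm]
    unfolding Bd_def al_def s_def .
  have Bev: "Bd c \<in> events" for c
    unfolding Bd_def al_def by measurable
  have sumE: "(\<Sum>i\<in>UNIV. (c * al \<omega> $ i) * eps i \<omega>) = c * (al \<omega> \<bullet> (\<chi> i. eps i \<omega>))" for c \<omega>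
    by (simp add: inner_vec_def sum_distrib_left mult.assoc)
  have sumA: "(\<Sum>i\<in>UNIV. (c * al \<omega> $ i)\<^sup>2) = al \<omega> \<bullet> al \<omega>" if "c\<^sup>2 = 1" for c \<omega>
  proof -
    have "(c * al \<omega> $ i)\<^sup>2 = al \<omega> $ i * al \<omega> $ i" for i
      using that by (simp add: power_mult_distrib power2_eq_square)
    then show ?thesis by (simp add: inner_vec_def)
  qed
  have aa0: "al \<omega> \<bullet> al \<omega> \<ge> 0" for \<omega> by simp
  let ?b = "B + R / lam * sqrt (2 * ln (1 / \<delta>))"
  define G1 where "G1 = {\<omega> \<in> space M. f x \<le> post_mean k lam (\<lambda>i. xs i \<omega>) (\<chi> i. f (xs i \<omega>) + eps i \<omega>) x
                  + ?b * sqrt (post_var k lam (\<lambda>i. xs i \<omega>) x)}"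
  define G2 where "G2 = {\<omega> \<in> space M. f x \<ge> post_mean k lam (\<lambda>i. xs i \<omega>) (\<chi> i. f (xs i \<omega>) + eps i \<omega>) x
                  - ?b * sqrt (post_var k lam (\<lambda>i. xs i \<omega>) x)}"
  have G1e: "G1 = {\<omega> \<in> space M. f x \<le> pm' \<omega> + ?b * sqrt (pv' \<omega>)}"
    unfolding G1_def Y_def[symmetric] using pw by auto
  have G2e: "G2 = {\<omega> \<in> space M. f x \<ge> pm' \<omega> - ?b * sqrt (pv' \<omega>)}"
    unfolding G2_def Y_def[symmetric] using pw by auto
  have G1ev: "G1 \<in> events" unfolding G1e by measurable
  have G2ev: "G2 \<in> events" unfolding G2e by measurable
  have sub1: "space M - G1 \<subseteq> Bd (-1)"
  proof
    fix \<omega> assume w: "\<omega> \<in> space M - G1"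
    then have wM: "\<omega> \<in> space M" by simp
    note p = pw[OF wM, folded al_def]
    have "- (al \<omega> \<bullet> (\<chi> i. eps i \<omega>)) > R * sqrt (al \<omega> \<bullet> al \<omega>) * s"
      apply (rule arith1[where kdd="kip k (d \<omega>) (d \<omega>)" and lam=lam and B=B and fx="f x"
            and aF="al \<omega> \<bullet> (\<chi> i. f (xs i \<omega>))" and pv="post_var k lam (\<lambda>i. xs i \<omega>) x"])
      using p aa0 lam_pos R_pos s0 B_pos w
      by (auto simp: G1_def Y_def[symmetric] s_def)
    then show "\<omega> \<in> Bd (-1)" using wM sumA[of "-1" \<omega>] unfolding Bd_def sumE by simp
  qed
  have sub2: "space M - G2 \<subseteq> Bd 1"
  proof
    fix \<omega> assume w: "\<omega> \<in> space M - G2"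
    then have wM: "\<omega> \<in> space M" by simp
    note p = pw[OF wM, folded al_def]
    have "al \<omega> \<bullet> (\<chi> i. eps i \<omega>) > R * sqrt (al \<omega> \<bullet> al \<omega>) * s"
      apply (rule arith2[where kdd="kip k (d \<omega>) (d \<omega>)" and lam=lam and B=B and fx="f x"
            and aF="al \<omega> \<bullet> (\<chi> i. f (xs i \<omega>))" and pv="post_var k lam (\<lambda>i. xs i \<omega>) x"])
      using p aa0 lam_pos R_pos s0 B_pos w
      by (auto simp: G2_def Y_def[symmetric] s_def)
    then show "\<omega> \<in> Bd 1" using wM sumA[of 1 \<omega>] unfolding Bd_def sumE by simp
  qed
  have "prob G1 \<ge> 1 - \<delta>"
  proof -
    have "prob (space M - G1) \<le> prob (Bd (-1))" using sub1 Bev by (intro finite_measure_mono) auto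
    then show ?thesis using prob_compl[OF G1ev] pB[of "-1"] by simp
  qed
  moreover have "prob G2 \<ge> 1 - \<delta>"
  proof -
    have "prob (space M - G2) \<le> prob (Bd 1)" using sub2 Bev by (intro finite_measure_mono) auto
    then show ?thesis using prob_compl[OF G2ev] pB[of 1] by simp
  qed
  ultimately show ?thesis unfolding G1_def G2_def by simp
qed

end
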